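(* Let $n\ge2$, let $\psi:\mathbb R\to(0,\infty)$ be continuous and even with $\int_{\mathbb R}\psi=+\infty$, $\Psi(x)=\int_0^x\psi$, $J=\psi\circ\Psi^{-1}$ convex, let $\rho:\mathbb R^{n-1}\to(0,\infty)$ be continuous and $d\mu=\psi(x_1)\rho(x')\,dx$. If $M,N\subset\mathbb R^n$ are open sets with $M\subset N$, then $$\operatorname{dist}\{M;\partial N\}\le\operatorname{dist}\{M^*;\partial N^*\},$$ where $^*$ denotes Steiner $\mu$-symmetrization.
   Context: For $A\subset\mathbb R$ open, $A^*=(-c,c)$ with $\int_{-c}^c\psi=\int_A\psi$ if this is finite, $A^*=\mathbb R$ otherwise; for $M\subset\mathbb R^n$, $M^*=\{(x_1,x'):x_1\in(M(x'))^*\}$ where $M(x')=\{x_1:(x_1,x')\in M\}$ (defined pointwise for open sets, so $M^*$ is open). *)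

theory Defs
  imports "HOL-Analysis.Analysis"
begin

definition sym1 :: "(real \<Rightarrow> real) \<Rightarrow> real set \<Rightarrow> real set" where
  "sym1 \<psi> A =
     (if (\<integral>\<^sup>+ x\<in>A. ennreal (\<psi> x) \<partial>lborel) = \<infinity> then UNIV
      else (let c = (THE c. c \<ge> 0 \<and>
                   (\<integral>\<^sup>+ x\<in>{-c<..<c}. ennreal (\<psi> x) \<partial>lborel) = (\<integral>\<^sup>+ x\<in>A. ennreal (\<psi> x) \<partial>lborel))
            in {-c<..<c}))"

text \<open>Steiner symmetrization in the first coordinate of R^n = R x R^(n-1).\<close>
definition steiner_sym :: "(real \<Rightarrow> real) \<Rightarrow> (real \<times> 'a) set \<Rightarrow> (real \<times> 'a) set" where
  "steiner_sym \<psi> M = {(x1, x'). x1 \<in> sym1 \<psi> {t. (t, x') \<in> M}}"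

text \<open>Distance between two sets, with value +infinity if one of them is empty.\<close>
definition set_dist_ext :: "'a::metric_space set \<Rightarrow> 'a set \<Rightarrow> ereal" where
  "set_dist_ext A B = (INF x\<in>A. INF y\<in>B. ereal (dist x y))"

end

theory Submission
  imports Defs
begin

locale psetup =
  fixes \<psi> :: "real \<Rightarrow> real"
  assumes cont: "continuous_on UNIV \<psi>" and pos: "\<And>x. \<psi> x > 0"
    and even: "\<And>x. \<psi> (- x) = \<psi> x"
    and Jconv: "convex_on UNIV (\<psi> \<circ> inv (\<lambda>x. LBINT t=0..x. \<psi> t))"
begin

definition Psi :: "real \<Rightarrow> real" where "Psi x = (LBINT t=0..x. \<psi> t)"
definition J :: "real \<Rightarrow> real" where "J = \<psi> \<circ> inv Psi"

lemma Psi_eq: "(\<lambda>x. LBINT t=0..x. \<psi> t) = Psi" by (simp add: Psi_def fun_eq_iff)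

lemma J_convex: "convex_on UNIV J" using Jconv by (simp add: Psi_eq J_def)

lemma Psi_deriv: "(Psi has_real_derivative \<psi> x) (at x)"
proof -
  have "((\<lambda>u. LBINT y=0..u. \<psi> y) has_vector_derivative (\<psi> x)) (at x within {-\<bar>x\<bar>-1..\<bar>x\<bar>+1})"
    unfolding zero_ereal_def
    by (rule interval_integral_FTC2) (auto intro: continuous_on_subset[OF cont])
  moreover have "at x within {-\<bar>x\<bar>-1..\<bar>x\<bar>+1} = at x" by (rule at_within_Icc_at) auto
  ultimately show ?thesis by (simp add: has_real_derivative_iff_has_vector_derivative Psi_eq)
qed

lemma Psi_0[simp]: "Psi 0 = 0" by (simp add: Psi_def zero_ereal_def)

lemma Psi_cont: "continuous_on S Psi"
  using Psi_deriv by (meson DERIV_isCont continuous_at_imp_continuous_on)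

lemma Psi_less: "x < y \<Longrightarrow> Psi x < Psi y"
  by (rule DERIV_pos_imp_increasing[of x y Psi]) (use Psi_deriv pos in blast)+

lemma Psi_le_iff[simp]: "Psi x \<le> Psi y \<longleftrightarrow> x \<le> y"
  by (smt (verit) Psi_less)
lemma Psi_less_iff[simp]: "Psi x < Psi y \<longleftrightarrow> x < y"
  by (metis Psi_le_iff not_le)
lemma Psi_eq_iff[simp]: "Psi x = Psi y \<longleftrightarrow> x = y"
  by (metis Psi_le_iff order_antisym order_refl)

lemma Psi_odd: "Psi (-x) = - Psi x"
proof -
  have "\<forall>x. ((\<lambda>x. Psi x + Psi (-x)) has_real_derivative 0) (at x)"
  proof
    fix x
    have d2: "((\<lambda>z. Psi (-z)) has_real_derivative \<psi> (-x) * (-1)) (at x)"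
      by (rule DERIV_chain2[OF Psi_deriv]) (auto intro!: derivative_eq_intros)
    have "((\<lambda>x. Psi x + Psi (-x)) has_real_derivative (\<psi> x + \<psi> (-x) * (-1))) (at x)"
      by (rule DERIV_add[OF Psi_deriv d2])
    then show "((\<lambda>x. Psi x + Psi (-x)) has_real_derivative 0) (at x)" by (simp add: even)
  qed
  from DERIV_isconst_all[OF this, of x 0] show ?thesis by simp
qed

lemma inj_Psi: "inj Psi" by (rule injI) simp

lemma J_Psi: "J (Psi x) = \<psi> x" by (simp add: J_def inv_f_f[OF inj_Psi])

lemma J_neg_Psi: "J (- Psi x) = \<psi> x"
  by (metis J_Psi Psi_odd even)

lemma J_mid: "J ((u + v) / 2) \<le> (J u + J v) / 2"
proof -
  have "J ((1 - 1/2) *\<^sub>R u + (1/2) *\<^sub>R v) \<le> (1 - 1/2) * J u + (1/2) * J v"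
    by (rule convex_onD[OF J_convex]) auto
  then show ?thesis by (simp add: field_simps)
qed

lemma psi_mono: assumes "0 \<le> x" "x \<le> y" shows "\<psi> x \<le> \<psi> y"
proof (cases "x = y")
  case True then show ?thesis by simp
next
  case False
  define u v where "u = Psi x" and "v = Psi y"
  have u0: "0 \<le> u" using assms Psi_le_iff[of 0 x] by (simp add: u_def)
  have uv: "u < v" using assms False by (simp add: u_def v_def)
  define t where "t = (v + u) / (2 * v)"
  have v0: "v > 0" using u0 uv by simp
  have t01: "0 \<le> t" "t \<le> 1" using u0 uv v0 by (auto simp: t_def field_simps)
  have eq: "(1 - t) *\<^sub>R (- v) + t *\<^sub>R v = u" using v0 by (simp add: t_def field_simps)
  have "J ((1 - t) *\<^sub>R (- v) + t *\<^sub>R v) \<le> (1 - t) * J (- v) + t * J v"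
    by (rule convex_onD[OF J_convex]) (use t01 in auto)
  also have "\<dots> = J v" unfolding v_def J_neg_Psi J_Psi by (simp add: algebra_simps)
  finally show ?thesis using eq by (simp add: u_def v_def J_Psi)
qed

lemma psi_ge0: "\<psi> x \<ge> \<psi> 0"
proof (cases "x \<ge> 0")
  case True then show ?thesis using psi_mono[of 0 x] by simp
next
  case False then show ?thesis using psi_mono[of 0 "-x"] even[of x] by simp
qed

lemma Psi_lower: assumes "x \<ge> 0" shows "Psi x \<ge> \<psi> 0 * x"
proof -
  have "(\<lambda>x. Psi x - \<psi> 0 * x) 0 \<le> (\<lambda>x. Psi x - \<psi> 0 * x) x"
  proof (rule DERIV_nonneg_imp_increasing_open[OF assms])
    fix z show "\<exists>y. ((\<lambda>x. Psi x - \<psi> 0 * x) has_real_derivative y) (at z) \<and> 0 \<le> y"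
      by (rule exI[of _ "\<psi> z - \<psi> 0 * 1"]) (auto intro!: derivative_eq_intros Psi_deriv psi_ge0)
  next
    show "continuous_on {0..x} (\<lambda>x. Psi x - \<psi> 0 * x)"
      by (intro continuous_intros Psi_cont)
  qed
  then show ?thesis by simp
qed

lemma surj_Psi: "surj Psi"
proof -
  have pos_case: "\<exists>x. Psi x = y" if "y \<ge> 0" for y
  proof -
    have "\<psi> 0 > 0" by (rule pos)
    have "\<exists>x\<ge>0. x \<le> y / \<psi> 0 \<and> Psi x = y"
    proof (rule IVT)
      show "Psi 0 \<le> y" using that by simp
      show "y \<le> Psi (y / \<psi> 0)" using Psi_lower[of "y / \<psi> 0"] that \<open>\<psi> 0 > 0\<close> by simp
      show "0 \<le> y / \<psi> 0" using that \<open>\<psi> 0 > 0\<close> by simp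
      show "\<forall>x. 0 \<le> x \<and> x \<le> y / \<psi> 0 \<longrightarrow> isCont Psi x"
        using Psi_deriv DERIV_isCont by blast
    qed
    then show ?thesis by blast
  qed
  show ?thesis
  proof (unfold surj_def, rule allI)
    fix y
    show "\<exists>x. y = Psi x"
    proof (cases "y \<ge> 0")
      case True then show ?thesis using pos_case by metis
    next
      case False
      then obtain x where "Psi x = - y" using pos_case[of "-y"] by auto
      then have "Psi (-x) = y" by (simp add: Psi_odd)
      then show ?thesis by metis
    qed
  qed
qed

definition Pinv :: "real \<Rightarrow> real" where "Pinv = inv Psi"

lemma Psi_Pinv[simp]: "Psi (Pinv y) = y" by (simp add: Pinv_def surj_f_inv_f[OF surj_Psi])
lemma Pinv_Psi[simp]: "Pinv (Psi x) = x" by (simp add: Pinv_def inv_f_f[OF inj_Psi])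

lemma Pinv_deriv: "(Pinv has_real_derivative inverse (\<psi> (Pinv y))) (at y)"
proof (rule DERIV_inverse_function[where f=Psi and a="y-1" and b="y+1"])
  show "DERIV Psi (Pinv y) :> \<psi> (Pinv y)" by (rule Psi_deriv)
  show "\<psi> (Pinv y) \<noteq> 0" using pos[of "Pinv y"] by simp
  have "isCont Pinv (Psi (Pinv y))"
    by (rule isCont_inverse_function[where d=1]) (auto intro: DERIV_isCont[OF Psi_deriv])
  then show "isCont Pinv y" by simp
qed auto

lemma ext_ineq:
  assumes "r \<ge> 0"
  shows "Psi (b + r) - Psi (a - r) \<ge> 2 * Psi (Pinv ((Psi b - Psi a)/2) + r)"
proof -
  define m where "m s = Psi (b + s) - Psi (a - s)" for s
  define \<rho> where "\<rho> s = Pinv (m s / 2)" for s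
  have dm: "((\<lambda>s. m s / 2) has_real_derivative ((\<psi> (b + s) + \<psi> (a - s)) / 2)) (at s)" for s
  proof -
    have d1: "((\<lambda>s. Psi (b + s)) has_real_derivative \<psi> (b + s) * 1) (at s)"
      by (rule DERIV_chain2[OF Psi_deriv]) (auto intro!: derivative_eq_intros)
    have d2: "((\<lambda>s. Psi (a - s)) has_real_derivative \<psi> (a - s) * (-1)) (at s)"
      by (rule DERIV_chain2[OF Psi_deriv]) (auto intro!: derivative_eq_intros)
    have "((\<lambda>s. (Psi (b + s) - Psi (a - s)) / 2) has_real_derivative ((\<psi> (b + s) * 1 - \<psi> (a - s) * (-1)) / 2)) (at s)"
      by (intro DERIV_cdivide DERIV_diff d1 d2)
    then show ?thesis by (simp add: m_def)
  qed
  have drho: "(\<rho> has_real_derivative inverse (\<psi> (\<rho> s)) * ((\<psi> (b + s) + \<psi> (a - s)) / 2)) (at s)" for s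
    unfolding \<rho>_def by (rule DERIV_chain2[OF Pinv_deriv dm])
  have D1: "inverse (\<psi> (\<rho> s)) * ((\<psi> (b + s) + \<psi> (a - s)) / 2) \<ge> 1" for s
  proof -
    have "\<psi> (\<rho> s) = J (m s / 2)" by (metis J_Psi Psi_Pinv \<rho>_def)
    also have "\<dots> = J ((Psi (b + s) + (- Psi (a - s))) / 2)" by (simp add: m_def)
    also have "\<dots> \<le> (J (Psi (b + s)) + J (- Psi (a - s))) / 2" by (rule J_mid)
    also have "\<dots> = (\<psi> (b + s) + \<psi> (a - s)) / 2" by (simp add: J_Psi J_neg_Psi)
    finally have "\<psi> (\<rho> s) \<le> (\<psi> (b + s) + \<psi> (a - s)) / 2" .
    with pos[of "\<rho> s"] show ?thesis by (simp add: field_simps)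
  qed
  have "(\<lambda>s. \<rho> s - s) 0 \<le> (\<lambda>s. \<rho> s - s) r"
  proof (rule DERIV_nonneg_imp_increasing_open[OF assms])
    fix z show "\<exists>y. ((\<lambda>s. \<rho> s - s) has_real_derivative y) (at z) \<and> 0 \<le> y"
      by (rule exI, rule conjI, rule DERIV_diff[OF drho DERIV_ident]) (use D1[of z] in simp)
  next
    show "continuous_on {0..r} (\<lambda>s. \<rho> s - s)"
      by (intro continuous_at_imp_continuous_on ballI continuous_intros DERIV_isCont[OF drho])
  qed
  then have "\<rho> 0 + r \<le> \<rho> r" by simp
  then have "Psi (\<rho> 0 + r) \<le> Psi (\<rho> r)" by simp
  also have "Psi (\<rho> r) = m r / 2" by (simp add: \<rho>_def)
  finally show ?thesis by (simp add: m_def \<rho>_def)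
qed

lemma gain_mono:
  assumes "0 \<le> c" "c \<le> c'" "r \<ge> 0"
  shows "Psi (c + r) - Psi c \<le> Psi (c' + r) - Psi c'"
proof -
  have "(\<lambda>x. Psi (x + r) - Psi x) c \<le> (\<lambda>x. Psi (x + r) - Psi x) c'"
  proof (rule DERIV_nonneg_imp_increasing_open[OF assms(2)])
    fix z assume z: "c < z" "z < c'"
    have d1: "((\<lambda>s. Psi (s + r)) has_real_derivative \<psi> (z + r) * 1) (at z)"
      by (rule DERIV_chain2[OF Psi_deriv]) (auto intro!: derivative_eq_intros)
    show "\<exists>y. ((\<lambda>x. Psi (x + r) - Psi x) has_real_derivative y) (at z) \<and> 0 \<le> y"
      by (rule exI, rule conjI, rule DERIV_diff[OF d1 Psi_deriv])
        (use psi_mono[of z "z + r"] z assms in simp)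
  next
    show "continuous_on {c..c'} (\<lambda>x. Psi (x + r) - Psi x)"
      by (intro continuous_intros continuous_on_compose2[OF Psi_cont[of UNIV]] Psi_cont) auto
  qed
  then show ?thesis by simp
qed

lemma gain_ineq:
  assumes "a \<le> b" "r \<ge> 0" "0 \<le> c" "2 * Psi c \<le> Psi b - Psi a"
  shows "(Psi (b + r) - Psi b) + (Psi a - Psi (a - r)) \<ge> 2 * (Psi (c + r) - Psi c)"
proof -
  define c' where "c' = Pinv ((Psi b - Psi a)/2)"
  have Pc': "2 * Psi c' = Psi b - Psi a" by (simp add: c'_def)
  have "c \<le> c'" using assms(4) Pc' by (metis Psi_le_iff mult_le_cancel_left_pos zero_less_numeral)
  have "Psi (b + r) - Psi (a - r) \<ge> 2 * Psi (c' + r)" using ext_ineq[OF assms(2), of b a] by (simp add: c'_def)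
  moreover have "Psi (c + r) - Psi c \<le> Psi (c' + r) - Psi c'" by (rule gain_mono) (use assms \<open>c \<le> c'\<close> in auto)
  ultimately show ?thesis using Pc' by (simp add: algebra_simps)
qed

definition D :: "real measure" where "D = density lborel (\<lambda>x. ennreal (\<psi> x))"

lemma psi_borel: "\<psi> \<in> borel_measurable borel"
  by (rule borel_measurable_continuous_onI[OF cont])

lemma sets_D[simp]: "sets D = sets borel" by (simp add: D_def)

lemma D_eq: "S \<in> sets borel \<Longrightarrow> (\<integral>\<^sup>+ x\<in>S. ennreal (\<psi> x) \<partial>lborel) = emeasure D S"
  unfolding D_def by (subst emeasure_density) (use psi_borel in auto)

lemma D_Icc: assumes "u \<le> v" shows "emeasure D {u..v} = ennreal (Psi v - Psi u)"
  and "emeasure D {u<..<v} = ennreal (Psi v - Psi u)"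
proof -
  have I: "(\<psi> has_integral (Psi v - Psi u)) {u..v}"
    by (rule fundamental_theorem_of_calculus[OF assms])
       (auto intro: has_field_derivative_at_within[OF Psi_deriv] simp: has_real_derivative_iff_has_vector_derivative[symmetric])
  have *: "emeasure D S = ennreal (Psi v - Psi u)"
    if S: "S \<in> sets borel" "(\<psi> has_integral (Psi v - Psi u)) S" for S
  proof -
    have "emeasure D S = (\<integral>\<^sup>+ x. ennreal (\<psi> x * indicator S x) \<partial>lborel)"
      by (simp add: D_eq[OF S(1), symmetric] nn_integral_set_ennreal)
    also have "\<dots> = ennreal (Psi v - Psi u)"
    proof (rule nn_integral_has_integral_lborel)
      show "(\<lambda>x. \<psi> x * indicator S x) \<in> borel_measurable borel"
        using psi_borel S(1) by (intro borel_measurable_times borel_measurable_indicator) auto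
      show "0 \<le> \<psi> x * indicator S x" for x using pos[of x] by (simp split: split_indicator)
      show "((\<lambda>x. \<psi> x * indicator S x) has_integral Psi v - Psi u) UNIV"
      proof -
        have "(\<lambda>x. \<psi> x * indicator S x) = (\<lambda>x. if x \<in> S then \<psi> x else 0)"
          by (auto simp: indicator_def)
        then show ?thesis using S(2) has_integral_restrict_UNIV[of S \<psi>] by simp
      qed
    qed
    finally show ?thesis .
  qed
  show "emeasure D {u..v} = ennreal (Psi v - Psi u)" by (rule *) (use I in auto)
  show "emeasure D {u<..<v} = ennreal (Psi v - Psi u)" by (rule *) (use I has_integral_Icc_iff_Ioo in auto)
qed

lemma Psi_nonneg: "0 \<le> c \<Longrightarrow> 0 \<le> Psi c"
  using Psi_le_iff[of 0 c] by simp

lemma D_sym: "0 \<le> c \<Longrightarrow> emeasure D {-c<..<c} = ennreal (2 * Psi c)"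
  by (subst D_Icc(2)) (auto simp: Psi_odd)

lemma sym1_inf: "S \<in> sets borel \<Longrightarrow> emeasure D S = \<infinity> \<Longrightarrow> sym1 \<psi> S = UNIV"
  by (simp add: sym1_def D_eq)

lemma sym1_fin:
  assumes S: "S \<in> sets borel" and fin: "emeasure D S \<noteq> \<infinity>"
  obtains c where "c \<ge> 0" "emeasure D S = ennreal (2 * Psi c)" "sym1 \<psi> S = {-c<..<c}"
proof -
  define m where "m = enn2real (emeasure D S)"
  have m0: "m \<ge> 0" by (simp add: m_def)
  have Sm: "emeasure D S = ennreal m" using fin by (simp add: m_def ennreal_enn2real_if)
  define c where "c = Pinv (m / 2)"
  have Pc: "Psi c = m / 2" by (simp add: c_def)
  have c0: "c \<ge> 0" using Psi_le_iff[of 0 c] Pc m0 by simp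
  have Dc: "emeasure D S = ennreal (2 * Psi c)" using Sm Pc by (simp add: mult.commute)
  have "(THE c'. c' \<ge> 0 \<and> (\<integral>\<^sup>+ x\<in>{-c'<..<c'}. ennreal (\<psi> x) \<partial>lborel) = (\<integral>\<^sup>+ x\<in>S. ennreal (\<psi> x) \<partial>lborel)) = c"
  proof (rule the_equality)
    show "c \<ge> 0 \<and> (\<integral>\<^sup>+ x\<in>{-c<..<c}. ennreal (\<psi> x) \<partial>lborel) = (\<integral>\<^sup>+ x\<in>S. ennreal (\<psi> x) \<partial>lborel)"
      using c0 by (simp add: D_eq S D_sym Dc)
  next
    fix c' assume "c' \<ge> 0 \<and> (\<integral>\<^sup>+ x\<in>{-c'<..<c'}. ennreal (\<psi> x) \<partial>lborel) = (\<integral>\<^sup>+ x\<in>S. ennreal (\<psi> x) \<partial>lborel)"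
    then have c'0: "c' \<ge> 0" and "ennreal (2 * Psi c') = ennreal (2 * Psi c)"
      by (auto simp: D_eq S D_sym Dc)
    then have "2 * Psi c' = 2 * Psi c" using Psi_nonneg c0
      by (subst (asm) ennreal_inj) auto
    then show "c' = c" by simp
  qed
  moreover have "(\<integral>\<^sup>+ x\<in>S. ennreal (\<psi> x) \<partial>lborel) \<noteq> \<infinity>" using fin by (simp add: D_eq S)
  ultimately have "sym1 \<psi> S = {-c<..<c}" by (simp add: sym1_def Let_def)
  then show ?thesis using that c0 Dc by blast
qed

lemma trunc:
  assumes A: "A \<in> sets borel" and lt: "v < emeasure D A"
  shows "\<exists>n::nat. v < emeasure D (A \<inter> {-real n..real n})"
proof -
  define An where "An n = A \<inter> {-real n..real n}" for n :: nat
  have "(SUP n. emeasure D (An n)) = emeasure D (\<Union>n. An n)"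
  proof (rule SUP_emeasure_incseq)
    show "range An \<subseteq> sets D" using A by (auto simp: An_def)
    show "incseq An" by (rule incseq_SucI) (auto simp: An_def)
  qed
  also have "(\<Union>n. An n) = A"
  proof
    show "(\<Union>n. An n) \<subseteq> A" by (auto simp: An_def)
    show "A \<subseteq> (\<Union>n. An n)"
    proof
      fix x assume "x \<in> A"
      obtain n :: nat where "\<bar>x\<bar> \<le> real n" using real_arch_simple by blast
      then have "x \<in> An n" using \<open>x \<in> A\<close> by (auto simp: An_def)
      then show "x \<in> (\<Union>n. An n)" by blast
    qed
  qed
  finally have "v < (SUP n. emeasure D (An n))" using lt by simp
  then show ?thesis by (auto simp: less_SUP_iff An_def)
qed

lemma ext_bounded:
  assumes A: "A \<in> sets borel" and ne: "A \<noteq> {}" and bd: "A \<subseteq> {-n..n}"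
    and B: "B \<in> sets borel" and r: "r > 0"
    and hyp: "\<And>t s. t \<in> A \<Longrightarrow> \<bar>s - t\<bar> < r \<Longrightarrow> s \<in> B"
    and c0: "c0 \<ge> 0" and mA: "ennreal (2 * Psi c0) \<le> emeasure D A"
  shows "ennreal (2 * Psi (c0 + r)) \<le> emeasure D B"
proof -
  have bb: "bdd_below A" "bdd_above A" using bd by (auto intro!: bdd_belowI[of _ "-n"] bdd_aboveI[of _ n])
  define a b where "a = Inf A" and "b = Sup A"
  have Aab: "A \<subseteq> {a..b}" using bb by (auto simp: a_def b_def intro: cInf_lower cSup_upper)
  have ab: "a \<le> b" using Aab ne by auto
  define L R where "L = {a - r<..<a}" and "R = {b<..<b + r}"
  have LB: "L \<subseteq> B"
  proof
    fix s assume "s \<in> L"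
    then have s: "a - r < s" "s < a" by (auto simp: L_def)
    then have "Inf A < s + r" by (simp add: a_def)
    then obtain t where t: "t \<in> A" "t < s + r" using cInf_less_iff[OF ne bb(1)] by blast
    have "a \<le> t" using t Aab by auto
    then show "s \<in> B" using hyp[OF t(1), of s] t s by auto
  qed
  have RB: "R \<subseteq> B"
  proof
    fix s assume "s \<in> R"
    then have s: "b < s" "s < b + r" by (auto simp: R_def)
    then have "s - r < Sup A" by (simp add: b_def)
    then obtain t where t: "t \<in> A" "s - r < t" using less_cSup_iff[OF ne bb(2)] by blast
    have "t \<le> b" using t Aab by auto
    then show "s \<in> B" using hyp[OF t(1), of s] t s by auto
  qed
  have mAab: "emeasure D A \<le> ennreal (Psi b - Psi a)"
    using emeasure_mono[OF Aab, of D] D_Icc(1)[OF ab] by simp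
  have le1: "2 * Psi c0 \<le> Psi b - Psi a"
  proof -
    have "ennreal (2 * Psi c0) \<le> ennreal (Psi b - Psi a)" using mA mAab by (rule order_trans)
    moreover have "0 \<le> Psi b - Psi a" using ab by simp
    ultimately show ?thesis by (simp add: ennreal_le_iff)
  qed
  have g: "2 * (Psi (c0 + r) - Psi c0) \<le> (Psi (b + r) - Psi b) + (Psi a - Psi (a - r))"
    by (rule gain_ineq) (use ab r c0 le1 in auto)
  have mL: "emeasure D L = ennreal (Psi a - Psi (a - r))" unfolding L_def by (rule D_Icc(2)) (use r in auto)
  have mR: "emeasure D R = ennreal (Psi (b + r) - Psi b)" unfolding R_def by (rule D_Icc(2)) (use r in auto)
  have d1: "A \<inter> L = {}" "(A \<union> L) \<inter> R = {}" using Aab ab by (auto simp: L_def R_def)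
  have sets: "A \<in> sets D" "L \<in> sets D" "R \<in> sets D" "A \<union> L \<in> sets D" using A by (auto simp: L_def R_def)
  have "emeasure D (A \<union> L \<union> R) = emeasure D A + emeasure D L + emeasure D R"
    using plus_emeasure[OF sets(1,2) d1(1)] plus_emeasure[OF sets(4,3) d1(2)] by simp
  also have "\<dots> \<ge> ennreal (2 * Psi c0) + ennreal (Psi a - Psi (a - r)) + ennreal (Psi (b + r) - Psi b)"
    using mA mL mR by (intro add_mono) auto
  finally have "ennreal (2 * Psi c0) + ennreal (Psi a - Psi (a - r)) + ennreal (Psi (b + r) - Psi b) \<le> emeasure D B"
    using emeasure_mono[of "A \<union> L \<union> R" B D] LB RB hyp r B
    by (smt (verit, best) Un_subset_iff abs_zero diff_self order_trans sets_D subsetI)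
  moreover have "ennreal (2 * Psi c0) + ennreal (Psi a - Psi (a - r)) + ennreal (Psi (b + r) - Psi b)
      = ennreal (2 * Psi c0 + (Psi a - Psi (a - r)) + (Psi (b + r) - Psi b))"
    using Psi_nonneg[OF c0] r ab by (simp add: ennreal_plus)
  moreover have "2 * Psi (c0 + r) \<le> 2 * Psi c0 + (Psi a - Psi (a - r)) + (Psi (b + r) - Psi b)"
    using g by simp
  ultimately show ?thesis by (metis ennreal_leI order_trans)
qed

lemma sym1_ext:
  assumes A: "A \<in> sets borel" and B: "B \<in> sets borel" and r: "r > 0"
    and hyp: "\<And>t s. t \<in> A \<Longrightarrow> \<bar>s - t\<bar> < r \<Longrightarrow> s \<in> B"
    and x: "x \<in> sym1 \<psi> A" and y: "\<bar>y - x\<bar> < r"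
  shows "y \<in> sym1 \<psi> B"
proof (cases "emeasure D B = \<infinity>")
  case True then show ?thesis using sym1_inf[OF B] by simp
next
  case finB: False
  obtain cB where cB: "cB \<ge> 0" "emeasure D B = ennreal (2 * Psi cB)" "sym1 \<psi> B = {-cB<..<cB}"
    using sym1_fin[OF B finB] by blast
  have AB: "A \<subseteq> B" using hyp r by force
  have finA: "emeasure D A \<noteq> \<infinity>"
    using emeasure_mono[OF AB, of D] B finB by (auto simp: top_unique)
  obtain cA where cA: "cA \<ge> 0" "emeasure D A = ennreal (2 * Psi cA)" "sym1 \<psi> A = {-cA<..<cA}"
    using sym1_fin[OF A finA] by blast
  define c0 where "c0 = \<bar>x\<bar>"
  have c0: "c0 \<ge> 0" "c0 < cA" using x cA(3) by (auto simp: c0_def)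
  have "ennreal (2 * Psi c0) < emeasure D A"
    unfolding cA(2)
  proof (rule ennreal_lessI)
    show "0 < 2 * Psi cA" using Psi_less_iff[of 0 cA] c0 by simp
    show "2 * Psi c0 < 2 * Psi cA" using c0 by simp
  qed
  then obtain n :: nat where n: "ennreal (2 * Psi c0) < emeasure D (A \<inter> {-real n..real n})"
    using trunc[OF A] by blast
  have ne: "A \<inter> {-real n..real n} \<noteq> {}" using n by (auto simp del: ennreal_less_zero_iff)
  have "ennreal (2 * Psi (c0 + r)) \<le> emeasure D B"
  proof (rule ext_bounded[OF _ ne _ B r _ c0(1)])
    show "A \<inter> {-real n..real n} \<in> sets borel" using A by auto
    show "A \<inter> {-real n..real n} \<subseteq> {- real n..real n}" by auto
    show "\<And>t s. t \<in> A \<inter> {-real n..real n} \<Longrightarrow> \<bar>s - t\<bar> < r \<Longrightarrow> s \<in> B" using hyp by auto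
    show "ennreal (2 * Psi c0) \<le> emeasure D (A \<inter> {-real n..real n})" using n by simp
  qed
  then have "2 * Psi (c0 + r) \<le> 2 * Psi cB"
    unfolding cB(2) using Psi_nonneg[OF cB(1)] by (simp add: ennreal_le_iff)
  then have "c0 + r \<le> cB" by simp
  moreover have "\<bar>y\<bar> < c0 + r" using y by (auto simp: c0_def)
  ultimately show ?thesis using cB(3) by auto
qed

lemma open_slice:
  fixes M :: "(real \<times> 'b::topological_space) set"
  assumes "open M" shows "open {t. (t, x') \<in> M}"
proof -
  have "open ((\<lambda>t. (t, x')) -` M)"
    by (rule continuous_open_vimage[OF \<open>open M\<close>]) (intro continuous_intros)
  then show ?thesis by (simp add: vimage_def)
qed

lemma steiner_ball:
  fixes M N :: "(real \<times> 'b::metric_space) set"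
  assumes "open M" "open N" "d > 0" and balls: "\<And>m. m \<in> M \<Longrightarrow> ball m d \<subseteq> N"
    and p: "p \<in> steiner_sym \<psi> M"
  shows "ball p d \<subseteq> steiner_sym \<psi> N"
proof
  fix q assume q: "q \<in> ball p d"
  obtain x1 x' where p_eq: "p = (x1, x')" by (cases p)
  obtain y1 y' where q_eq: "q = (y1, y')" by (cases q)
  define h where "h = dist x' y'"
  have h0: "h \<ge> 0" by (simp add: h_def)
  have dq: "sqrt ((dist x1 y1)\<^sup>2 + h\<^sup>2) < d" using q by (simp add: p_eq q_eq dist_Pair_Pair h_def)
  then have "sqrt ((dist x1 y1)\<^sup>2 + h\<^sup>2) < sqrt (d\<^sup>2)" using \<open>d > 0\<close> by simp
  then have lt: "(dist x1 y1)\<^sup>2 + h\<^sup>2 < d\<^sup>2" by (simp only: real_sqrt_less_iff)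
  define r where "r = sqrt (d\<^sup>2 - h\<^sup>2)"
  have pos2: "d\<^sup>2 - h\<^sup>2 > 0" using lt zero_le_power2[of "dist x1 y1"] by linarith
  have r0: "r > 0" using pos2 by (simp add: r_def)
  have r2: "r\<^sup>2 = d\<^sup>2 - h\<^sup>2" using pos2 unfolding r_def by (simp add: real_sqrt_pow2)
  have yx: "\<bar>y1 - x1\<bar> < r"
  proof -
    have "\<bar>y1 - x1\<bar>\<^sup>2 < r\<^sup>2" using lt r2 by (simp add: dist_real_def abs_minus_commute)
    then show ?thesis using r0 by (simp add: power2_less_imp_less)
  qed
  define A where "A = {t. (t, x') \<in> M}"
  define B where "B = {t. (t, y') \<in> N}"
  have AB: "A \<in> sets borel" "B \<in> sets borel"
    unfolding A_def B_def by (auto intro!: borel_open open_slice assms)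
  have hyp: "s \<in> B" if t: "t \<in> A" and st: "\<bar>s - t\<bar> < r" for t s
  proof -
    have "(t, x') \<in> M" using t by (simp add: A_def)
    moreover have "(s, y') \<in> ball (t, x') d"
    proof -
      have "\<bar>s - t\<bar>\<^sup>2 < r\<^sup>2" using st by (intro power_strict_mono) auto
      then have "(dist t s)\<^sup>2 < r\<^sup>2" by (simp add: dist_real_def abs_minus_commute)
      then have "(dist t s)\<^sup>2 + h\<^sup>2 < d\<^sup>2" using r2 by simp
      then have "sqrt ((dist t s)\<^sup>2 + h\<^sup>2) < sqrt (d\<^sup>2)" by (simp only: real_sqrt_less_iff)
      then show ?thesis using \<open>d > 0\<close> by (simp add: dist_Pair_Pair h_def)
    qed
    ultimately have "(s, y') \<in> N" using balls by blast
    then show ?thesis by (simp add: B_def)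
  qed
  have x1A: "x1 \<in> sym1 \<psi> A" using p by (simp add: p_eq steiner_sym_def A_def)
  have "y1 \<in> sym1 \<psi> B"
    by (rule sym1_ext[where A=A and B=B and r=r and x=x1]) (use AB r0 hyp yx x1A in auto)
  then show "q \<in> steiner_sym \<psi> N" by (simp add: q_eq steiner_sym_def B_def)
qed

end

lemma ball_in_N:
  fixes M N :: "'b::euclidean_space set"
  assumes "open N" "M \<subseteq> N" and dd: "\<And>m f. m \<in> M \<Longrightarrow> f \<in> frontier N \<Longrightarrow> d \<le> dist m f"
    and m: "m \<in> M"
  shows "ball m d \<subseteq> N"
proof
  fix y assume y: "y \<in> ball m d"
  show "y \<in> N"
  proof (rule ccontr)
    assume yN: "y \<notin> N"
    have "closed_segment m y \<inter> frontier N \<noteq> {}"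
    proof (rule connected_Int_frontier)
      show "connected (closed_segment m y)" by simp
      show "closed_segment m y \<inter> N \<noteq> {}" using m assms(2) by auto
      show "closed_segment m y - N \<noteq> {}" using yN by auto
    qed
    then obtain z where z: "z \<in> closed_segment m y" "z \<in> frontier N" by blast
    have "dist m z \<le> dist m y" using dist_in_closed_segment[OF z(1)] by (simp add: dist_commute)
    moreover have "dist m y < d" using y by simp
    ultimately show False using dd[OF m z(2)] by simp
  qed
qed

theorem corollary2:
  fixes \<psi> :: "real \<Rightarrow> real" and \<rho> :: "'a::euclidean_space \<Rightarrow> real"
    and M N :: "(real \<times> 'a) set"
  assumes psi_cont: "continuous_on UNIV \<psi>"
    and psi_pos: "\<And>x. \<psi> x > 0"
    and psi_even: "\<And>x. \<psi> (- x) = \<psi> x"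
    and psi_int: "(\<integral>\<^sup>+ x. ennreal (\<psi> x) \<partial>lborel) = \<infinity>"
    and J_convex: "convex_on UNIV (\<psi> \<circ> inv (\<lambda>x. LBINT t=0..x. \<psi> t))"
    and rho_cont: "continuous_on UNIV \<rho>"
    and rho_pos: "\<And>y. \<rho> y > 0"
    and "open M" and "open N" and "M \<subseteq> N"
  shows "set_dist_ext M (frontier N)
           \<le> set_dist_ext (steiner_sym \<psi> M) (frontier (steiner_sym \<psi> N))"
proof -
  interpret psetup \<psi> using psi_cont psi_pos psi_even J_convex by unfold_locales
  define L where "L = set_dist_ext M (frontier N)"
  show ?thesis
    unfolding L_def[symmetric] set_dist_ext_def[of "steiner_sym \<psi> M"]
  proof (intro INF_greatest)
    fix p q assume p: "p \<in> steiner_sym \<psi> M" and q: "q \<in> frontier (steiner_sym \<psi> N)"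
    show "L \<le> ereal (dist p q)"
    proof (rule ccontr)
      assume "\<not> L \<le> ereal (dist p q)"
      then have "ereal (dist p q) < L" by simp
      then obtain d where d: "ereal (dist p q) < ereal d" "ereal d < L" using ereal_dense2 by blast
      have "dist p q < d" using d(1) by simp
      then have d0: "d > 0" using zero_le_dist[of p q] by linarith
      have dd: "d \<le> dist m f" if "m \<in> M" "f \<in> frontier N" for m f
      proof -
        have "L \<le> ereal (dist m f)" unfolding L_def set_dist_ext_def
          by (rule INF_lower2[OF that(1)], rule INF_lower[OF that(2)])
        then have "ereal d < ereal (dist m f)" using d(2) by (rule order_less_le_trans[rotated])
        then show ?thesis by simp
      qed
      have balls: "ball m d \<subseteq> N" if "m \<in> M" for m
        by (rule ball_in_N[OF \<open>open N\<close> \<open>M \<subseteq> N\<close> dd that])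
      have "ball p d \<subseteq> steiner_sym \<psi> N"
        by (rule steiner_ball[OF \<open>open M\<close> \<open>open N\<close> d0 balls p])
      then have "ball p d \<subseteq> interior (steiner_sym \<psi> N)"
        by (simp add: interior_maximal)
      moreover have "q \<in> ball p d" using d(1) by simp
      ultimately show False using q by (auto simp: frontier_def)
    qed
  qed
qed

end
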